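(* Let $A$ be a finite-vertex graph and $w$ a right-infinite path over $A$. The following are equivalent: (1) $w$ is recurrent; (2) $P_{\mathsf{Sd}}(w)$ contains an idempotent; (3) $P_{\mathsf V}(w)$ contains an idempotent for every pseudovariety of semigroupoids $\mathsf V$ containing $\mathsf N$; (4) $P_{g\mathsf{LSl}}(w)$ contains an idempotent.
   Context: Semigroupoids are graphs with associative partial multiplication $st$ defined iff the source of $s$ equals the range of $t$. Pseudovarieties of semigroupoids: classes of finite semigroupoids closed under divisors, finite direct products, finite coproducts; $\mathsf{Sd}$ is the pseudovariety of all finite semigroupoids, $\mathsf N$ that of finite nilpotent semigroups, $\mathsf{LSl}$ the pseudovariety of finite semigroups $S$ such that $eSe$ is a semilattice for every idempotent $e$, and $g\mathsf{LSl}$ the smallest pseudovariety of semigroupoids containing $\mathsf{LSl}$. $\overline{\Omega}_A\mathsf V$ is the free pro-$\mathsf V$ semigroupoid over the finite-vertex graph $A$, containing the paths over $A$ when $\mathsf V\supseteq\mathsf N$. A right-infinite path is a sequence $w=w_0w_1\cdots$ of edges with each $w[0,n)=w_0\cdots w_{n-1}$ a path; $w[m,m+n)=w_m\cdots w_{m+n-1}$, $w[0,n]=w_0\cdots w_n$. $P_{\mathsf V}(w)$ is the set of cluster points in $\overline{\Omega}_A\mathsf V$ of $(w[0,n])_{n\in\mathbb N}$. $w$ is recurrent if for every $n$ there is $m>n$ with $w[0,n)=w[m,m+n)$. *)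

theory Defs
  imports Main
begin

text \<open>Convention (as in the context): the product st is defined iff
  the source of s equals the range of t; then src (st) = src t and rng (st) = rng s.\<close>

record ('v, 'e) sgd =
  verts :: "'v set"
  edges :: "'e set"
  src   :: "'e \<Rightarrow> 'v"
  rng   :: "'e \<Rightarrow> 'v"
  mult  :: "'e \<Rightarrow> 'e \<Rightarrow> 'e"

definition is_sgd :: "('v, 'e, 'z) sgd_scheme \<Rightarrow> bool" where
  "is_sgd S \<longleftrightarrow>
     (\<forall>s\<in>edges S. src S s \<in> verts S \<and> rng S s \<in> verts S) \<and>
     (\<forall>s\<in>edges S. \<forall>t\<in>edges S. src S s = rng S t \<longrightarrow>
        mult S s t \<in> edges S \<and> src S (mult S s t) = src S t \<and> rng S (mult S s t) = rng S s) \<and>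
     (\<forall>s\<in>edges S. \<forall>t\<in>edges S. \<forall>u\<in>edges S. src S s = rng S t \<longrightarrow> src S t = rng S u \<longrightarrow>
        mult S (mult S s t) u = mult S s (mult S t u))"

definition finite_sgd :: "('v, 'e, 'z) sgd_scheme \<Rightarrow> bool" where
  "finite_sgd S \<longleftrightarrow> is_sgd S \<and> finite (verts S) \<and> finite (edges S)"

definition sgd_hom ::
  "('v1, 'e1, 'z1) sgd_scheme \<Rightarrow> ('v2, 'e2, 'z2) sgd_scheme \<Rightarrow> ('v1 \<Rightarrow> 'v2) \<Rightarrow> ('e1 \<Rightarrow> 'e2) \<Rightarrow> bool" where
  "sgd_hom S T fv fe \<longleftrightarrow>
     fv ` verts S \<subseteq> verts T \<and> fe ` edges S \<subseteq> edges T \<and>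
     (\<forall>s\<in>edges S. src T (fe s) = fv (src S s) \<and> rng T (fe s) = fv (rng S s)) \<and>
     (\<forall>s\<in>edges S. \<forall>t\<in>edges S. src S s = rng S t \<longrightarrow> fe (mult S s t) = mult T (fe s) (fe t))"

definition sgd_iso ::
  "('v1, 'e1, 'z1) sgd_scheme \<Rightarrow> ('v2, 'e2, 'z2) sgd_scheme \<Rightarrow> bool" where
  "sgd_iso S T \<longleftrightarrow> (\<exists>fv fe. sgd_hom S T fv fe \<and>
      bij_betw fv (verts S) (verts T) \<and> bij_betw fe (edges S) (edges T))"

definition sub_sgd :: "('v, 'e) sgd \<Rightarrow> ('v, 'e) sgd \<Rightarrow> bool" where
  "sub_sgd S' S \<longleftrightarrow> is_sgd S' \<and> verts S' \<subseteq> verts S \<and> edges S' \<subseteq> edges S \<and>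
     (\<forall>s\<in>edges S'. src S' s = src S s \<and> rng S' s = rng S s) \<and>
     (\<forall>s\<in>edges S'. \<forall>t\<in>edges S'. src S s = rng S t \<longrightarrow> mult S' s t = mult S s t)"

definition divides :: "('v1, 'e1) sgd \<Rightarrow> ('v2, 'e2) sgd \<Rightarrow> bool" where
  "divides T S \<longleftrightarrow> (\<exists>S' fv fe. sub_sgd S' S \<and> sgd_hom S' T fv fe \<and>
      bij_betw fv (verts S') (verts T) \<and> fe ` edges S' = edges T)"

definition prod_sgd :: "('v1, 'e1) sgd \<Rightarrow> ('v2, 'e2) sgd \<Rightarrow> ('v1 \<times> 'v2, 'e1 \<times> 'e2) sgd" where
  "prod_sgd S T = \<lparr> verts = verts S \<times> verts T, edges = edges S \<times> edges T,
     src = (\<lambda>(s, t). (src S s, src T t)), rng = (\<lambda>(s, t). (rng S s, rng T t)),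
     mult = (\<lambda>(s, t) (s', t'). (mult S s s', mult T t t')) \<rparr>"

definition coprod_sgd :: "('v1, 'e1) sgd \<Rightarrow> ('v2, 'e2) sgd \<Rightarrow> ('v1 + 'v2, 'e1 + 'e2) sgd" where
  "coprod_sgd S T = \<lparr> verts = verts S <+> verts T, edges = edges S <+> edges T,
     src = case_sum (Inl \<circ> src S) (Inr \<circ> src T), rng = case_sum (Inl \<circ> rng S) (Inr \<circ> rng T),
     mult = (\<lambda>x y. case (x, y) of (Inl s, Inl s') \<Rightarrow> Inl (mult S s s')
                              | (Inr t, Inr t') \<Rightarrow> Inr (mult T t t')
                              | _ \<Rightarrow> undefined) \<rparr>"

text \<open>Pseudovarieties of semigroupoids are represented as sets of finite semigroupoids
  on the carrier types nat (every finite semigroupoid is isomorphic to such one).\<close>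
type_synonym nsgd = "(nat, nat) sgd"

definition pseudovariety :: "nsgd set \<Rightarrow> bool" where
  "pseudovariety V \<longleftrightarrow>
     (\<forall>S\<in>V. finite_sgd S) \<and>
     (\<forall>S\<in>V. \<forall>T::nsgd. finite_sgd T \<longrightarrow> divides T S \<longrightarrow> T \<in> V) \<and>
     (\<forall>T::nsgd. finite_sgd T \<and> card (verts T) = 1 \<and> card (edges T) = 1 \<longrightarrow> T \<in> V) \<and>
     (\<forall>S\<in>V. \<forall>S'\<in>V. \<forall>T::nsgd. finite_sgd T \<longrightarrow> sgd_iso T (prod_sgd S S') \<longrightarrow> T \<in> V) \<and>
     (\<forall>T::nsgd. finite_sgd T \<and> verts T = {} \<longrightarrow> T \<in> V) \<and>
     (\<forall>S\<in>V. \<forall>S'\<in>V. \<forall>T::nsgd. finite_sgd T \<longrightarrow> sgd_iso T (coprod_sgd S S') \<longrightarrow> T \<in> V)"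

fun sprod :: "('e \<Rightarrow> 'e \<Rightarrow> 'e) \<Rightarrow> 'e list \<Rightarrow> 'e" where
  "sprod m [] = undefined"
| "sprod m [x] = x"
| "sprod m (x # y # ys) = m x (sprod m (y # ys))"

definition Sd :: "nsgd set" where
  "Sd = {S. finite_sgd S}"

definition fin_semigroup :: "nsgd \<Rightarrow> bool" where
  "fin_semigroup S \<longleftrightarrow> finite_sgd S \<and> card (verts S) = 1 \<and> edges S \<noteq> {}"

definition N_sgd :: "nsgd set" where
  "N_sgd = {S. fin_semigroup S \<and>
     (\<exists>n\<ge>1. \<exists>z. \<forall>xs. length xs = n \<and> set xs \<subseteq> edges S \<longrightarrow> sprod (mult S) xs = z)}"

definition LSl :: "nsgd set" where
  "LSl = {S. fin_semigroup S \<and>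
     (\<forall>e\<in>edges S. mult S e e = e \<longrightarrow>
        (let eSe = {mult S (mult S e s) e | s. s \<in> edges S} in
         \<forall>x\<in>eSe. \<forall>y\<in>eSe. mult S x y = mult S y x \<and> mult S x x = x))}"

definition gLSl :: "nsgd set" where
  "gLSl = \<Inter>{V. pseudovariety V \<and> LSl \<subseteq> V}"

text \<open>A graph A: vertex type 'v (finite), edge type 'e (all elements are edges),
  source map al, range map om.  Graph morphisms A -> S into members of V index the
  coordinates of the canonical embedding of the free pro-V semigroupoid into
  (vertices x vertices x product of the S).\<close>

type_synonym ('v, 'e) gidx = "nsgd \<times> ('v \<Rightarrow> nat) \<times> ('e \<Rightarrow> nat)"

definition gidx :: "('e \<Rightarrow> 'v) \<Rightarrow> ('e \<Rightarrow> 'v) \<Rightarrow> nsgd set \<Rightarrow> ('v, 'e) gidx set" where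
  "gidx al om V = {(S, fv, fe). S \<in> V \<and> (\<forall>x. fv x \<in> verts S) \<and>
      (\<forall>a. fe a \<in> edges S \<and> src S (fe a) = fv (al a) \<and> rng S (fe a) = fv (om a))}"

definition is_path :: "('e \<Rightarrow> 'v) \<Rightarrow> ('e \<Rightarrow> 'v) \<Rightarrow> 'e list \<Rightarrow> bool" where
  "is_path al om u \<longleftrightarrow> u \<noteq> [] \<and> (\<forall>i. Suc i < length u \<longrightarrow> al (u ! i) = om (u ! Suc i))"

definition inf_path :: "('e \<Rightarrow> 'v) \<Rightarrow> ('e \<Rightarrow> 'v) \<Rightarrow> (nat \<Rightarrow> 'e) \<Rightarrow> bool" where
  "inf_path al om w \<longleftrightarrow> (\<forall>i. al (w i) = om (w (Suc i)))"

definition recurrent :: "(nat \<Rightarrow> 'e) \<Rightarrow> bool" where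
  "recurrent w \<longleftrightarrow> (\<forall>n. \<exists>m>n. \<forall>i<n. w (m + i) = w i)"

text \<open>Elements of the pro-V semigroupoid: (source, range, coordinates).\<close>
type_synonym ('v, 'e) proel = "'v \<times> 'v \<times> (('v, 'e) gidx \<Rightarrow> nat)"

definition embed :: "('e \<Rightarrow> 'v) \<Rightarrow> ('e \<Rightarrow> 'v) \<Rightarrow> nsgd set \<Rightarrow> 'e list \<Rightarrow> ('v, 'e) proel" where
  "embed al om V u = (al (last u), om (hd u),
     (\<lambda>i. if i \<in> gidx al om V then (case i of (S, fv, fe) \<Rightarrow> sprod (mult S) (map fe u)) else undefined))"

text \<open>Basic open neighbourhood agreement (product topology, discrete factors).\<close>
definition agree_on :: "('v, 'e) gidx set \<Rightarrow> ('v, 'e) proel \<Rightarrow> ('v, 'e) proel \<Rightarrow> bool" where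
  "agree_on F x y \<longleftrightarrow> fst x = fst y \<and> fst (snd x) = fst (snd y) \<and>
     (\<forall>i\<in>F. snd (snd x) i = snd (snd y) i)"

text \<open>The free pro-V semigroupoid: closure of the image of the finite paths.\<close>
definition Omega :: "('e \<Rightarrow> 'v) \<Rightarrow> ('e \<Rightarrow> 'v) \<Rightarrow> nsgd set \<Rightarrow> ('v, 'e) proel set" where
  "Omega al om V = {x. (\<forall>i. i \<notin> gidx al om V \<longrightarrow> snd (snd x) i = undefined) \<and>
     (\<forall>F. finite F \<and> F \<subseteq> gidx al om V \<longrightarrow>
        (\<exists>u. is_path al om u \<and> agree_on F x (embed al om V u)))}"

definition Omega_mult :: "('e \<Rightarrow> 'v) \<Rightarrow> ('e \<Rightarrow> 'v) \<Rightarrow> nsgd set \<Rightarrow> ('v, 'e) proel \<Rightarrow> ('v, 'e) proel \<Rightarrow> ('v, 'e) proel" where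
  "Omega_mult al om V x y = (fst y, fst (snd x),
     (\<lambda>i. if i \<in> gidx al om V then (case i of (S, fv, fe) \<Rightarrow> mult S (snd (snd x) i) (snd (snd y) i))
          else undefined))"

definition Omega_idempotent :: "('e \<Rightarrow> 'v) \<Rightarrow> ('e \<Rightarrow> 'v) \<Rightarrow> nsgd set \<Rightarrow> ('v, 'e) proel \<Rightarrow> bool" where
  "Omega_idempotent al om V x \<longleftrightarrow> x \<in> Omega al om V \<and> fst x = fst (snd x) \<and>
     Omega_mult al om V x x = x"

definition PV :: "('e \<Rightarrow> 'v) \<Rightarrow> ('e \<Rightarrow> 'v) \<Rightarrow> nsgd set \<Rightarrow> (nat \<Rightarrow> 'e) \<Rightarrow> ('v, 'e) proel set" where
  "PV al om V w = {x \<in> Omega al om V.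
     \<forall>F. finite F \<and> F \<subseteq> gidx al om V \<longrightarrow>
       (\<forall>N. \<exists>n\<ge>N. agree_on F x (embed al om V (map w [0..<Suc n])))}"

end

theory Submission
  imports Defs "HOL-Analysis.Analysis"
begin

definition seg :: "('v, 'e, 'z) sgd_scheme \<Rightarrow> ('a \<Rightarrow> 'e) \<Rightarrow> (nat \<Rightarrow> 'a) \<Rightarrow> nat \<Rightarrow> nat \<Rightarrow> 'e" where
  "seg S fe w i j = sprod (sgd.mult S) (map (fe \<circ> w) [i..<j])"

lemma seg_single: "seg S fe w i (Suc i) = fe (w i)"
  by (simp add: seg_def)

lemma seg_step: "Suc i < j \<Longrightarrow> seg S fe w i j = sgd.mult S (fe (w i)) (seg S fe w (Suc i) j)"
proof -
  assume a: "Suc i < j"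
  have "[i..<j] = i # Suc i # [Suc (Suc i)..<j]" using a by (simp add: upt_conv_Cons)
  moreover have "[Suc i..<j] = Suc i # [Suc (Suc i)..<j]" using a by (simp add: upt_conv_Cons)
  ultimately show ?thesis unfolding seg_def by simp
qed

locale segctx =
  fixes S :: "('v, 'e, 'z) sgd_scheme" and fv :: "'w \<Rightarrow> 'v" and fe :: "'a \<Rightarrow> 'e"
    and al om :: "'a \<Rightarrow> 'w" and w :: "nat \<Rightarrow> 'a"
  assumes sg: "is_sgd S"
    and fe: "\<And>a. fe a \<in> edges S \<and> src S (fe a) = fv (al a) \<and> rng S (fe a) = fv (om a)"
    and ip: "inf_path al om w"
begin

lemma ipw: "al (w i) = om (w (Suc i))" using ip by (simp add: inf_path_def)

lemma cl: "s \<in> edges S \<Longrightarrow> t \<in> edges S \<Longrightarrow> src S s = rng S t \<Longrightarrow>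
   sgd.mult S s t \<in> edges S \<and> src S (sgd.mult S s t) = src S t \<and> rng S (sgd.mult S s t) = rng S s"
  using sg unfolding is_sgd_def by blast

lemma asc: "s \<in> edges S \<Longrightarrow> t \<in> edges S \<Longrightarrow> u \<in> edges S \<Longrightarrow> src S s = rng S t \<Longrightarrow> src S t = rng S u \<Longrightarrow>
   sgd.mult S (sgd.mult S s t) u = sgd.mult S s (sgd.mult S t u)"
  using sg unfolding is_sgd_def by blast

lemma seg_props: "i < j \<Longrightarrow> seg S fe w i j \<in> edges S \<and> src S (seg S fe w i j) = fv (al (w (j - 1)))
   \<and> rng S (seg S fe w i j) = fv (om (w i))"
proof (induction "j - i" arbitrary: i)
  case 0 then show ?case by simp
next
  case (Suc d)
  show ?case
  proof (cases "Suc i = j")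
    case True then show ?thesis using fe by (auto simp: seg_single)
  next
    case False
    hence lt: "Suc i < j" using Suc by simp
    have IH: "seg S fe w (Suc i) j \<in> edges S \<and> src S (seg S fe w (Suc i) j) = fv (al (w (j - 1)))
   \<and> rng S (seg S fe w (Suc i) j) = fv (om (w (Suc i)))" using Suc lt by auto
    have c: "src S (fe (w i)) = rng S (seg S fe w (Suc i) j)" using IH fe ipw by simp
    have "sgd.mult S (fe (w i)) (seg S fe w (Suc i) j) \<in> edges S \<and> src S (sgd.mult S (fe (w i)) (seg S fe w (Suc i) j)) = src S (seg S fe w (Suc i) j) \<and> rng S (sgd.mult S (fe (w i)) (seg S fe w (Suc i) j)) = rng S (fe (w i))"
      using cl[OF _ _ c] IH fe by blast
    then show ?thesis using IH fe lt by (simp add: seg_step)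
  qed
qed

lemma seg_mult: "i < j \<Longrightarrow> j < k \<Longrightarrow> seg S fe w i k = sgd.mult S (seg S fe w i j) (seg S fe w j k)"
proof (induction "j - i" arbitrary: i)
  case 0 then show ?case by simp
next
  case (Suc d)
  show ?case
  proof (cases "Suc i = j")
    case True
    have "Suc i < k" using True Suc.prems by simp
    then have "seg S fe w i k = sgd.mult S (fe (w i)) (seg S fe w (Suc i) k)" by (rule seg_step)
    moreover have "seg S fe w i j = fe (w i)" using True seg_single by metis
    ultimately show ?thesis using True by simp
  next
    case False
    hence lt: "Suc i < j" using Suc by simp
    have IH: "seg S fe w (Suc i) k = sgd.mult S (seg S fe w (Suc i) j) (seg S fe w j k)" using Suc lt by auto
    have p1: "seg S fe w (Suc i) j \<in> edges S \<and> src S (seg S fe w (Suc i) j) = fv (al (w (j - 1)))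
   \<and> rng S (seg S fe w (Suc i) j) = fv (om (w (Suc i)))" using seg_props lt by blast
    have p2: "seg S fe w j k \<in> edges S \<and> rng S (seg S fe w j k) = fv (om (w j))" using seg_props Suc by blast
    have e: "al (w (j - 1)) = om (w j)" using ipw[of "j-1"] lt by simp
    have "seg S fe w i k = sgd.mult S (fe (w i)) (sgd.mult S (seg S fe w (Suc i) j) (seg S fe w j k))"
      using IH Suc lt by (simp add: seg_step)
    also have "\<dots> = sgd.mult S (sgd.mult S (fe (w i)) (seg S fe w (Suc i) j)) (seg S fe w j k)"
      using asc[of "fe (w i)" "seg S fe w (Suc i) j" "seg S fe w j k"] p1 p2 e fe[of "w i"] ipw[of i] by simp
    also have "\<dots> = sgd.mult S (seg S fe w i j) (seg S fe w j k)" using lt by (simp add: seg_step)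
    finally show ?thesis .
  qed
qed

end

lemma seg_shift:
  assumes "\<forall>i<n. w (d + i) = w i"
  shows "seg S fe w d (d + n) = seg S fe w 0 n"
proof -
  have "[d..<d+n] = map (\<lambda>i. i + d) [0..<n]" by (metis add.commute map_add_upt)
  hence "map (fe \<circ> w) [d..<d+n] = map (fe \<circ> w) [0..<n]" using assms
    by (simp add: add.commute)
  thus ?thesis by (simp add: seg_def)
qed

lemma comb:
  fixes al om :: "'e \<Rightarrow> 'v" and w :: "nat \<Rightarrow> 'e"
  assumes ip: "inf_path al om w" and rec: "recurrent w"
    and VS: "\<forall>S\<in>V. finite_sgd S" and fF: "finite F" and FI: "F \<subseteq> gidx al om V"
  shows "\<exists>N\<ge>M. al (w N) = om (w 0) \<and> (\<forall>i\<in>F. case i of (S, fv, fe) \<Rightarrow>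
            sgd.mult S (seg S fe w 0 (Suc N)) (seg S fe w 0 (Suc N)) = seg S fe w 0 (Suc N))"
proof -
  define r where "r = (\<lambda>n. SOME m. m > n \<and> (\<forall>i<n. w (m + i) = w i))"
  have r: "r n > n \<and> (\<forall>i<n. w (r n + i) = w i)" for n
  proof -
    have "\<exists>m. m > n \<and> (\<forall>i<n. w (m + i) = w i)" using rec by (simp add: recurrent_def)
    then show ?thesis unfolding r_def by (rule someI_ex)
  qed
  define l where "l = (\<lambda>k. ((\<lambda>x. r x + x) ^^ k) (Suc M))"
  have l0: "l 0 = Suc M" by (simp add: l_def)
  have lS: "l (Suc k) = r (l k) + l k" for k by (simp add: l_def)
  have lge: "l k \<ge> Suc M" for k
    by (induction k) (use l0 lS in auto)
  have P: "k < j \<Longrightarrow> 2 * l k < l j \<and> (\<forall>i<l k. w (l j - l k + i) = w i)" for k j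
  proof (induction j)
    case 0 then show ?case by simp
  next
    case (Suc j)
    show ?case
    proof (cases "k = j")
      case True
      have "l (Suc j) - l k = r (l k)" using True lS[of k] by simp
      then show ?thesis using r[of "l k"] lS[of k] True by auto
    next
      case False
      hence kj: "k < j" using Suc by simp
      have IH: "2 * l k < l j \<and> (\<forall>i<l k. w (l j - l k + i) = w i)" using Suc.IH kj by blast
      have "2 * l k < l (Suc j)" using IH lS[of j] by simp
      moreover have "w (l (Suc j) - l k + i) = w i" if "i < l k" for i
      proof -
        define q where "q = l j - l k + i"
        have e1: "l (Suc j) - l k + i = r (l j) + q" using IH lS[of j] that unfolding q_def by linarith
        have "q < l j" using IH that unfolding q_def by linarith
        hence "w (r (l j) + q) = w q" using r[of "l j"] by blast
        also have "w q = w i" using IH that unfolding q_def by blast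
        finally show ?thesis using e1 by simp
      qed
      ultimately show ?thesis by blast
    qed
  qed
  define vals where "vals = (\<lambda>k. (\<lambda>i. if i \<in> F then (case i of (S, fv, fe) \<Rightarrow> seg S fe w 0 (l k)) else undefined))"
  have segin: "seg S fe w 0 n \<in> edges S" if "(S, fv, fe) \<in> F" "0 < n" for S fv fe n
  proof -
    have "(S, fv, fe) \<in> gidx al om V" using that FI by auto
    hence "S \<in> V" "\<And>a. fe a \<in> edges S \<and> src S (fe a) = fv (al a) \<and> rng S (fe a) = fv (om a)"
      unfolding gidx_def by auto
    then interpret segctx S fv fe al om w using VS ip by unfold_locales (auto simp: finite_sgd_def)
    show ?thesis using seg_props that by blast
  qed
  have "range vals \<subseteq> (\<Pi>\<^sub>E i\<in>F. edges (fst i))"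
  proof
    fix f assume "f \<in> range vals"
    then obtain k where k: "f = vals k" by blast
    show "f \<in> (\<Pi>\<^sub>E i\<in>F. edges (fst i))"
      unfolding k vals_def using segin lge[of k] by (fastforce simp: PiE_iff extensional_def split: prod.splits)
  qed
  moreover have "finite (\<Pi>\<^sub>E i\<in>F. edges (fst i))"
  proof (rule finite_PiE[OF fF])
    fix i assume "i \<in> F"
    then obtain S fv fe where i: "i = (S, fv, fe)" "(S, fv, fe) \<in> gidx al om V" using FI by (cases i) auto
    then show "finite (edges (fst i))" using VS unfolding gidx_def finite_sgd_def by auto
  qed
  ultimately have "finite (range vals)" by (rule finite_subset)
  hence "\<not> inj vals" using finite_imageD by blast
  then obtain k j where kj0: "k \<noteq> j" "vals k = vals j" unfolding inj_def by blast
  then obtain k j where kj: "k < j" "vals k = vals j"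
    by (metis linorder_neqE_nat)
  have Pkj: "2 * l k < l j" "\<forall>i<l k. w (l j - l k + i) = w i" using P[OF kj(1)] by auto
  define N where "N = l j - l k - 1"
  have lk1: "l k \<ge> Suc M" using lge by blast
  have SN: "Suc N = l j - l k" using Pkj lk1 unfolding N_def by simp
  have NM: "N \<ge> M" using Pkj lk1 unfolding N_def by simp
  have vert: "al (w N) = om (w 0)"
  proof -
    have "al (w N) = om (w (Suc N))" using ip by (simp add: inf_path_def)
    also have "\<dots> = om (w 0)" using Pkj(2)[rule_format, of 0] lk1 SN by simp
    finally show ?thesis .
  qed
  have idem: "case i of (S, fv, fe) \<Rightarrow>
            sgd.mult S (seg S fe w 0 (Suc N)) (seg S fe w 0 (Suc N)) = seg S fe w 0 (Suc N)" if iF: "i \<in> F" for i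
  proof -
    obtain S fv fe where i: "i = (S, fv, fe)" by (cases i) auto
    have "(S, fv, fe) \<in> gidx al om V" using iF i FI by auto
    hence "S \<in> V" "\<And>a. fe a \<in> edges S \<and> src S (fe a) = fv (al a) \<and> rng S (fe a) = fv (om a)"
      unfolding gidx_def by auto
    then interpret segctx S fv fe al om w using VS ip by unfold_locales (auto simp: finite_sgd_def)
    define a where "a = seg S fe w 0 (l k)"
    define t where "t = seg S fe w (l k) (l j - l k)"
    define aat where "aat = seg S fe w 0 (l j - l k)"
    have a': "seg S fe w (l j - l k) (l j) = a"
      using seg_shift[of "l k" w "l j - l k" S fe] Pkj unfolding a_def by simp
    have aj: "seg S fe w 0 (l j) = a"
      using kj(2) iF i unfolding vals_def a_def by (metis (mono_tags, lifting) case_prod_conv)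
    have lt1: "0 < l k" "l k < l j - l k" "l j - l k < l j" using Pkj lk1 by auto
    have at_eq: "aat = sgd.mult S a t" unfolding aat_def a_def t_def using seg_mult lt1 by blast
    have ata: "sgd.mult S aat a = a" using seg_mult[of 0 "l j - l k" "l j"] lt1 a' aj unfolding aat_def by simp
    have pa: "a \<in> edges S" "src S a = fv (al (w (l k - 1)))" "rng S a = fv (om (w 0))"
      using seg_props[of 0 "l k"] lt1 unfolding a_def by auto
    have pt: "t \<in> edges S" "src S t = fv (al (w (l j - l k - 1)))" "rng S t = fv (om (w (l k)))"
      using seg_props[of "l k" "l j - l k"] lt1 unfolding t_def by auto
    have pat: "aat \<in> edges S" "src S aat = fv (al (w (l j - l k - 1)))" "rng S aat = fv (om (w 0))"
      using seg_props[of 0 "l j - l k"] lt1 unfolding aat_def by auto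
    have v1: "al (w (l k - 1)) = om (w (l k))" using ipw[of "l k - 1"] lt1 by simp
    have v2: "al (w (l j - l k - 1)) = om (w 0)" using vert SN by (metis diff_Suc_1)
    have "sgd.mult S aat aat = sgd.mult S aat (sgd.mult S a t)" using at_eq by simp
    also have "\<dots> = sgd.mult S (sgd.mult S aat a) t" using asc[of aat a t] pa pt pat v1 v2 by simp
    also have "\<dots> = aat" using ata at_eq by simp
    finally have "sgd.mult S aat aat = aat" .
    thus ?thesis using i SN unfolding aat_def by simp
  qed
  show ?thesis using NM vert idem by blast
qed

lemma embed_w: "embed al om V (map w [0..<Suc N]) = (al (w N), om (w 0),
   (\<lambda>i. if i \<in> gidx al om V then (case i of (S, fv, fe) \<Rightarrow> seg S fe w 0 (Suc N)) else undefined))"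
  unfolding embed_def seg_def by (auto simp: last_map hd_map map_map simp del: upt_Suc)

lemma path_w: "inf_path al om w \<Longrightarrow> is_path al om (map w [0..<Suc N])"
  unfolding is_path_def inf_path_def by (auto simp del: upt_Suc simp: nth_append)

lemma cyl_open:
  fixes D :: "'i \<Rightarrow> 'a set" and I :: "'i set"
  defines "X \<equiv> product_topology (\<lambda>i. discrete_topology (D i)) I"
  assumes "f \<in> topspace X" "finite F" "F \<subseteq> I"
  shows "openin X {g \<in> topspace X. \<forall>i\<in>F. g i = f i}"
  using assms(3,4)
proof (induction F)
  case empty then show ?case by simp
next
  case (insert j F)
  have o2: "openin X {g \<in> topspace X. g j \<in> {f j}}"
    unfolding X_def
  proof (rule openin_continuous_map_preimage)
    show "continuous_map (product_topology (\<lambda>i. discrete_topology (D i)) I) (discrete_topology (D j)) (\<lambda>x. x j)"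
      using insert by (intro continuous_map_product_projection) auto
    show "openin (discrete_topology (D j)) {f j}" using assms(2) insert unfolding X_def by (auto simp: PiE_iff)
  qed
  have o1: "openin X {g \<in> topspace X. \<forall>i\<in>F. g i = f i}" using insert.IH insert.prems by blast
  have eq: "{g \<in> topspace X. \<forall>i\<in>insert j F. g i = f i} =
     {g \<in> topspace X. \<forall>i\<in>F. g i = f i} \<inter> {g \<in> topspace X. g j \<in> {f j}}" by auto
  show ?case unfolding eq by (rule openin_Int[OF o1 o2])
qed

lemma determined_open:
  fixes D :: "'i \<Rightarrow> 'a set" and I :: "'i set"
  defines "X \<equiv> product_topology (\<lambda>i. discrete_topology (D i)) I"
  assumes Z: "Z \<subseteq> topspace X" "finite F" "F \<subseteq> I"
    and det: "\<And>f g. f \<in> Z \<Longrightarrow> g \<in> topspace X \<Longrightarrow> (\<forall>i\<in>F. g i = f i) \<Longrightarrow> g \<in> Z"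
  shows "openin X Z"
proof (subst openin_subopen, intro ballI)
  fix f assume f: "f \<in> Z"
  show "\<exists>T. openin X T \<and> f \<in> T \<and> T \<subseteq> Z"
    by (rule exI[of _ "{g \<in> topspace X. \<forall>i\<in>F. g i = f i}"])
       (use cyl_open[of f D I F] f Z det in \<open>auto simp: X_def\<close>)
qed

lemma determined_closed:
  fixes D :: "'i \<Rightarrow> 'a set" and I :: "'i set"
  assumes Z: "Z \<subseteq> topspace (product_topology (\<lambda>i. discrete_topology (D i)) I)" "finite F" "F \<subseteq> I"
    and det: "\<And>f g. f \<in> Z \<Longrightarrow> g \<in> topspace (product_topology (\<lambda>i. discrete_topology (D i)) I) \<Longrightarrow> (\<forall>i\<in>F. g i = f i) \<Longrightarrow> g \<in> Z"
  shows "closedin (product_topology (\<lambda>i. discrete_topology (D i)) I) Z"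
proof -
  have "openin (product_topology (\<lambda>i. discrete_topology (D i)) I) (topspace (product_topology (\<lambda>i. discrete_topology (D i)) I) - Z)"
  proof (rule determined_open[OF _ Z(2,3)])
    show "topspace (product_topology (\<lambda>i. discrete_topology (D i)) I) - Z \<subseteq> topspace (product_topology (\<lambda>i. discrete_topology (D i)) I)"
      by (rule Diff_subset)
  next
    fix f g
    assume f: "f \<in> topspace (product_topology (\<lambda>i. discrete_topology (D i)) I) - Z"
      and g: "g \<in> topspace (product_topology (\<lambda>i. discrete_topology (D i)) I)" and fg: "\<forall>i\<in>F. g i = f i"
    show "g \<in> topspace (product_topology (\<lambda>i. discrete_topology (D i)) I) - Z"
    proof
      show "g \<in> topspace (product_topology (\<lambda>i. discrete_topology (D i)) I)" by (rule g)
      show "g \<notin> Z"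
      proof
        assume "g \<in> Z"
        moreover have "\<forall>i\<in>F. f i = g i" using fg by simp
        ultimately have "f \<in> Z" using det[of g f] f by blast
        then show False using f by blast
      qed
    qed
  qed
  thus ?thesis using Z by (simp add: closedin_def)
qed

lemma rec_imp_idem:
  fixes al om :: "'e \<Rightarrow> 'v" and w :: "nat \<Rightarrow> 'e"
  assumes ip: "inf_path al om w" and rec: "recurrent w" and VS: "\<forall>S\<in>V. finite_sgd S"
  shows "\<exists>x\<in>PV al om V w. Omega_idempotent al om V x"
proof -
  define I where "I = gidx al om V"
  define D :: "('v, 'e) gidx \<Rightarrow> nat set" where "D = (\<lambda>i. edges (fst i))"
  define X where "X = product_topology (\<lambda>i. discrete_topology (D i)) I"
  define emb where "emb = (\<lambda>N i. if i \<in> I then (case i of (S, fv, fe) \<Rightarrow> seg S fe w 0 (Suc N)) else undefined)"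
  define idm where "idm = (\<lambda>(i::('v, 'e) gidx) (c::nat). case i of (S, fv, fe) \<Rightarrow> sgd.mult S c c = c)"
  define Cs where "Cs = (\<lambda>F M. {f \<in> topspace X. (\<forall>i\<in>F. idm i (f i)) \<and>
        (\<exists>N\<ge>M. al (w N) = om (w 0) \<and> (\<forall>i\<in>F. f i = emb N i))})"
  define U where "U = {Cs F M | F M. finite F \<and> F \<subseteq> I}"
  have topX: "topspace X = (\<Pi>\<^sub>E i\<in>I. D i)" unfolding X_def by simp
  have finD: "finite (D i)" if "i \<in> I" for i
    using that VS unfolding I_def D_def gidx_def finite_sgd_def by auto
  have cX: "compact_space X" unfolding X_def
    by (simp add: compact_space_product_topology compact_space_discrete_topology finD)
  have embX: "emb N \<in> topspace X" for N
  proof -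
    have "seg S fe w 0 (Suc N) \<in> edges S" if "(S, fv, fe) \<in> I" for S fv fe
    proof -
      have "S \<in> V" "\<And>a. fe a \<in> edges S \<and> src S (fe a) = fv (al a) \<and> rng S (fe a) = fv (om a)"
        using that unfolding I_def gidx_def by auto
      then interpret segctx S fv fe al om w using VS ip by unfold_locales (auto simp: finite_sgd_def)
      show ?thesis using seg_props by blast
    qed
    thus ?thesis unfolding topX emb_def D_def by (fastforce simp: PiE_iff extensional_def split: prod.splits)
  qed
  have mono: "Cs F' M' \<subseteq> Cs F M" if FF: "F \<subseteq> F'" and MM: "M \<le> M'" for F F' M M'
  proof
    fix f assume "f \<in> Cs F' M'"
    then obtain N where "f \<in> topspace X" "\<forall>i\<in>F'. idm i (f i)" "N \<ge> M'" "al (w N) = om (w 0)" "\<forall>i\<in>F'. f i = emb N i"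
      unfolding Cs_def by blast
    then have "f \<in> topspace X" "\<forall>i\<in>F. idm i (f i)" "N \<ge> M" "al (w N) = om (w 0)" "\<forall>i\<in>F. f i = emb N i"
      using FF MM by auto
    then show "f \<in> Cs F M" unfolding Cs_def by blast
  qed
  have nonempty: "Cs F M \<noteq> {}" if fF: "finite F" and FI: "F \<subseteq> I" for F M
  proof -
    obtain N where N: "N \<ge> M" "al (w N) = om (w 0)" "\<forall>i\<in>F. case i of (S, fv, fe) \<Rightarrow>
            sgd.mult S (seg S fe w 0 (Suc N)) (seg S fe w 0 (Suc N)) = seg S fe w 0 (Suc N)"
      using comb[OF ip rec VS fF FI[unfolded I_def]] by blast
    have "\<forall>i\<in>F. idm i (emb N i)"
    proof
      fix i assume "i \<in> F"
      then obtain S fv fe where i: "i = (S, fv, fe)" "i \<in> I" using FI by (cases i) auto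
      show "idm i (emb N i)" using N(3) \<open>i \<in> F\<close> i unfolding idm_def emb_def by auto
    qed
    hence "emb N \<in> Cs F M"
      unfolding Cs_def using embX N(1,2) by blast
    thus ?thesis by blast
  qed
  have closed: "closedin X C" if "C \<in> U" for C
  proof -
    obtain F M where C: "C = Cs F M" "finite F" "F \<subseteq> I" using \<open>C \<in> U\<close> unfolding U_def by blast
    have sub: "Cs F M \<subseteq> topspace X" unfolding Cs_def by blast
    have det: "g \<in> Cs F M" if fZ: "f \<in> Cs F M" and gX: "g \<in> topspace X" and fg: "\<forall>i\<in>F. g i = f i" for f g
    proof -
      obtain N where "\<forall>i\<in>F. idm i (f i)" "N \<ge> M" "al (w N) = om (w 0)" "\<forall>i\<in>F. f i = emb N i"
        using fZ unfolding Cs_def by blast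
      then have "\<forall>i\<in>F. idm i (g i)" "N \<ge> M" "al (w N) = om (w 0)" "\<forall>i\<in>F. g i = emb N i"
        using fg by auto
      then show ?thesis using gX unfolding Cs_def by blast
    qed
    show ?thesis unfolding C(1) X_def
      by (rule determined_closed[OF sub[unfolded X_def] C(2,3) det[unfolded X_def]])
  qed
  have fip: "\<Inter>\<F> \<noteq> {}" if "finite \<F>" "\<F> \<subseteq> U" for \<F>
  proof -
    have "\<exists>F0 M0. finite F0 \<and> F0 \<subseteq> I \<and> (\<forall>C\<in>\<F>. Cs F0 M0 \<subseteq> C)"
      using that
    proof (induction \<F>)
      case empty then show ?case by blast
    next
      case (insert C \<F>)
      then obtain F0 M0 where h: "finite F0" "F0 \<subseteq> I" "\<forall>C\<in>\<F>. Cs F0 M0 \<subseteq> C" by auto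
      obtain F1 M1 where C: "C = Cs F1 M1" "finite F1" "F1 \<subseteq> I" using insert unfolding U_def by blast
      have "Cs (F0 \<union> F1) (max M0 M1) \<subseteq> Cs F0 M0" "Cs (F0 \<union> F1) (max M0 M1) \<subseteq> Cs F1 M1"
        by (rule mono; simp)+
      then show ?case using h C by (intro exI[of _ "F0 \<union> F1"] exI[of _ "max M0 M1"]) blast
    qed
    then obtain F0 M0 where "finite F0" "F0 \<subseteq> I" "\<forall>C\<in>\<F>. Cs F0 M0 \<subseteq> C" by blast
    with nonempty[of F0 M0] show ?thesis by blast
  qed
  have "\<Inter>U \<noteq> {}"
    apply (rule compact_space_fip[THEN iffD1, OF cX, rule_format])
    using closed fip by auto
  then obtain c where c: "c \<in> \<Inter>U" by blast
  have cC: "c \<in> Cs F M" if "finite F" "F \<subseteq> I" for F M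
    using c that unfolding U_def by blast
  have ctop: "c \<in> topspace X" using cC[of "{}" 0] unfolding Cs_def by blast
  define x where "x = (om (w 0), om (w 0), c)"
  have agree: "agree_on F x (embed al om V (map w [0..<Suc N]))"
    if "F \<subseteq> I" "al (w N) = om (w 0)" "\<forall>i\<in>F. c i = emb N i" for F N
    using that unfolding agree_on_def x_def embed_w emb_def I_def by auto
  have cund: "\<forall>i. i \<notin> gidx al om V \<longrightarrow> snd (snd x) i = undefined"
    using ctop unfolding topX x_def I_def by (auto simp: PiE_iff extensional_def)
  have xO: "x \<in> Omega al om V"
    unfolding Omega_def
  proof (intro CollectI conjI cund allI impI)
    fix F assume F: "finite F \<and> F \<subseteq> gidx al om V"
    then obtain N where "al (w N) = om (w 0)" "\<forall>i\<in>F. c i = emb N i"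
      using cC[of F 0] unfolding Cs_def I_def by auto
    then show "\<exists>u. is_path al om u \<and> agree_on F x (embed al om V u)"
      using agree F path_w[OF ip] unfolding I_def by blast
  qed
  have xP: "x \<in> PV al om V w"
    unfolding PV_def
  proof (intro CollectI conjI xO allI impI)
    fix F N0 assume F: "finite F \<and> F \<subseteq> gidx al om V"
    then obtain N where "N \<ge> N0" "al (w N) = om (w 0)" "\<forall>i\<in>F. c i = emb N i"
      using cC[of F N0] unfolding Cs_def I_def by auto
    then show "\<exists>n\<ge>N0. agree_on F x (embed al om V (map w [0..<Suc n]))"
      using agree F unfolding I_def by blast
  qed
  have "Omega_mult al om V x x = x"
  proof -
    have pt: "(if i \<in> gidx al om V then (case i of (S, fv, fe) \<Rightarrow> sgd.mult S (c i) (c i)) else undefined) = c i" for i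
    proof (cases "i \<in> I")
      case True
      then have "idm i (c i)" using cC[of "{i}" 0] unfolding Cs_def by auto
      then show ?thesis using True unfolding idm_def I_def by (auto split: prod.splits)
    next
      case False
      then have "c i = undefined" using PiE_arb[OF ctop[unfolded topX] False] by simp
      then show ?thesis using False unfolding I_def by simp
    qed
    have E: "(\<lambda>i. if i \<in> gidx al om V then (case i of (S, fv, fe) \<Rightarrow> sgd.mult S (c i) (c i)) else undefined) = c"
      by (rule ext, rule pt)
    show ?thesis unfolding Omega_mult_def x_def fst_conv snd_conv E by (rule refl)
  qed
  then have "Omega_idempotent al om V x" using xO unfolding Omega_idempotent_def x_def by simp
  then show ?thesis using xP by blast
qed

definition Fac :: "nat \<Rightarrow> 'b list \<Rightarrow> 'b list set" where
  "Fac k x = {f. length f = k \<and> (\<exists>i. i + k \<le> length x \<and> (\<forall>j<k. f ! j = x ! (i + j)))}"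

definition Vw :: "nat \<Rightarrow> 'b list \<Rightarrow> 'b list \<times> 'b list \<times> 'b list set" where
  "Vw k x = (take k x, drop (length x - k) x, Fac k x)"

fun Mw :: "nat \<Rightarrow> 'b list \<times> 'b list \<times> 'b list set \<Rightarrow> 'b list \<times> 'b list \<times> 'b list set \<Rightarrow> 'b list \<times> 'b list \<times> 'b list set" where
  "Mw k (p1, s1, Z1) (p2, s2, Z2) = (take k (p1 @ p2), drop (length (s1 @ s2) - k) (s1 @ s2), Z1 \<union> Z2 \<union> Fac k (s1 @ p2))"

lemma take_app_take: "take k (x @ y) = take k (take k x @ take k y)"
  by (simp add: take_append min_def)

lemma drop_app_drop: "drop (length (x @ y) - k) (x @ y) =
   drop (length (drop (length x - k) x @ drop (length y - k) y) - k) (drop (length x - k) x @ drop (length y - k) y)"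
proof -
  have "rev (drop (length z - k) z) = take k (rev z)" for z :: "'a list"
    by (cases "k \<le> length z") (simp_all add: rev_drop)
  hence e: "drop (length z - k) z = rev (take k (rev z))" for z :: "'a list"
    by (metis rev_rev_ident)
  show ?thesis unfolding e by (simp add: take_append min_def)
qed

lemma Fac_app:
  shows "Fac k (x @ y) = Fac k x \<union> Fac k y \<union> Fac k (drop (length x - k) x @ take k y)"
proof (intro equalityI subsetI)
  fix f assume "f \<in> Fac k (x @ y)"
  then obtain i where f: "length f = k" "i + k \<le> length x + length y" "\<forall>j<k. f ! j = (x @ y) ! (i + j)"
    unfolding Fac_def by auto
  show "f \<in> Fac k x \<union> Fac k y \<union> Fac k (drop (length x - k) x @ take k y)"
  proof (cases "i + k \<le> length x")
    case True
    then have "f \<in> Fac k x" using f unfolding Fac_def by (auto simp: nth_append)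
    then show ?thesis by blast
  next
    case False
    show ?thesis
    proof (cases "i \<ge> length x")
      case True
      have "\<forall>j<k. f ! j = y ! (i - length x + j)" using f True by (auto simp: nth_append)
      then have "f \<in> Fac k y" using f True unfolding Fac_def by (intro CollectI conjI exI[of _ "i - length x"]) auto
      then show ?thesis by blast
    next
      case False2: False
      define a where "a = min k (length x)"
      define i' where "i' = i - (length x - a)"
      have ia: "i \<ge> length x - a" using False False2 unfolding a_def by auto
      have "\<forall>j<k. f ! j = (drop (length x - k) x @ take k y) ! (i' + j)"
      proof (intro allI impI)
        fix j assume j: "j < k"
        show "f ! j = (drop (length x - k) x @ take k y) ! (i' + j)"
        proof (cases "i + j < length x")
          case True
          then show ?thesis using f(3) j ia unfolding i'_def a_def by (auto simp: nth_append min_def)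
        next
          case False
          then show ?thesis using f(3) j ia False2 unfolding i'_def a_def by (auto simp: nth_append min_def)
        qed
      qed
      moreover have "i' + k \<le> length (drop (length x - k) x @ take k y)"
        using f(2) ia False2 unfolding i'_def a_def by (auto simp: min_def)
      ultimately have "f \<in> Fac k (drop (length x - k) x @ take k y)" using f(1) unfolding Fac_def by blast
      then show ?thesis by blast
    qed
  qed
next
  fix f assume "f \<in> Fac k x \<union> Fac k y \<union> Fac k (drop (length x - k) x @ take k y)"
  then consider "f \<in> Fac k x" | "f \<in> Fac k y" | "f \<in> Fac k (drop (length x - k) x @ take k y)" by blast
  then show "f \<in> Fac k (x @ y)"
  proof cases
    case 1
    then obtain i where "length f = k" "i + k \<le> length x" "\<forall>j<k. f ! j = x ! (i + j)" unfolding Fac_def by auto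
    then show ?thesis unfolding Fac_def by (intro CollectI conjI exI[of _ i]) (auto simp: nth_append)
  next
    case 2
    then obtain i where "length f = k" "i + k \<le> length y" "\<forall>j<k. f ! j = y ! (i + j)" unfolding Fac_def by auto
    then show ?thesis unfolding Fac_def by (intro CollectI conjI exI[of _ "length x + i"]) (auto simp: nth_append)
  next
    case 3
    then obtain i where i: "length f = k" "i + k \<le> length (drop (length x - k) x @ take k y)"
      "\<forall>j<k. f ! j = (drop (length x - k) x @ take k y) ! (i + j)" unfolding Fac_def by auto
    define a where "a = min k (length x)"
    have la: "length (drop (length x - k) x) = a" unfolding a_def by auto
    have "\<forall>j<k. f ! j = (x @ y) ! (length x - a + i + j)"
    proof (intro allI impI)
      fix j assume j: "j < k"
      show "f ! j = (x @ y) ! (length x - a + i + j)"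
      proof (cases "i + j < a")
        case True
        have e: "length x - a + i + j = length x - a + (i + j)" by simp
        show ?thesis unfolding e using True i(3) j la unfolding a_def by (auto simp: nth_append min_def)
      next
        case False
        then show ?thesis using i(2,3) j la unfolding a_def by (auto simp: nth_append min_def nth_take split: if_splits)
      qed
    qed
    moreover have "length x - a + i + k \<le> length (x @ y)" using i(2) la unfolding a_def by (auto simp: min_def split: if_splits)
    ultimately show ?thesis using i(1) unfolding Fac_def by blast
  qed
qed

lemma Vw_app: "Vw k (x @ y) = Mw k (Vw k x) (Vw k y)"
  unfolding Vw_def Mw.simps using take_app_take drop_app_drop Fac_app by metis

definition trS :: "'a set \<Rightarrow> ('a \<Rightarrow> nat) \<Rightarrow> ('a \<Rightarrow> 'a \<Rightarrow> 'a) \<Rightarrow> nsgd" where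
  "trS C h M = sgd.make {0} (h ` C) (\<lambda>_. 0) (\<lambda>_. 0) (\<lambda>a b. h (M (inv_into C h a) (inv_into C h b)))"

lemma trS_simps: "verts (trS C h M) = {0}" "edges (trS C h M) = h ` C" "src (trS C h M) = (\<lambda>_. 0)"
  "rng (trS C h M) = (\<lambda>_. 0)" "sgd.mult (trS C h M) = (\<lambda>a b. h (M (inv_into C h a) (inv_into C h b)))"
  by (simp_all add: trS_def sgd.make_def)

lemma trS_mult: "inj_on h C \<Longrightarrow> a \<in> C \<Longrightarrow> b \<in> C \<Longrightarrow> sgd.mult (trS C h M) (h a) (h b) = h (M a b)"
  by (simp add: trS_simps)

lemma trS_LSl:
  assumes fin: "finite C" and ne: "C \<noteq> {}" and inj: "inj_on h C"
    and cl: "\<And>a b. a \<in> C \<Longrightarrow> b \<in> C \<Longrightarrow> M a b \<in> C"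
    and asc: "\<And>a b c. a \<in> C \<Longrightarrow> b \<in> C \<Longrightarrow> c \<in> C \<Longrightarrow> M (M a b) c = M a (M b c)"
    and lsl: "\<And>e c1 c2. e \<in> C \<Longrightarrow> c1 \<in> C \<Longrightarrow> c2 \<in> C \<Longrightarrow> M e e = e \<Longrightarrow>
        M (M (M e c1) e) (M (M e c2) e) = M (M (M e c2) e) (M (M e c1) e) \<and>
        M (M (M e c1) e) (M (M e c1) e) = M (M e c1) e"
  shows "trS C h M \<in> LSl"
proof -
  let ?T = "trS C h M"
  have mT: "sgd.mult ?T (h a) (h b) = h (M a b)" if "a \<in> C" "b \<in> C" for a b
    using trS_mult[OF inj that] .
  have sg: "is_sgd ?T"
    unfolding is_sgd_def
  proof (intro conjI ballI impI)
    fix s t u assume s: "s \<in> edges ?T" and t: "t \<in> edges ?T" and u: "u \<in> edges ?T"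
    then obtain a b c where abc: "s = h a" "t = h b" "u = h c" "a \<in> C" "b \<in> C" "c \<in> C"
      by (auto simp: trS_simps)
    show "sgd.mult ?T (sgd.mult ?T s t) u = sgd.mult ?T s (sgd.mult ?T t u)"
      using abc mT cl asc by simp
  next
    fix s t assume s: "s \<in> edges ?T" and t: "t \<in> edges ?T"
    then obtain a b where abc: "s = h a" "t = h b" "a \<in> C" "b \<in> C"
      by (auto simp: trS_simps)
    show "sgd.mult ?T s t \<in> edges ?T" using abc mT cl by (simp add: trS_simps)
    show "src ?T (sgd.mult ?T s t) = src ?T t" by (simp add: trS_simps)
    show "rng ?T (sgd.mult ?T s t) = rng ?T s" by (simp add: trS_simps)
  qed (auto simp: trS_simps)
  have fs: "fin_semigroup ?T"
    unfolding fin_semigroup_def finite_sgd_def using sg fin ne by (simp add: trS_simps)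
  show ?thesis
    unfolding LSl_def
  proof (intro CollectI conjI fs ballI impI)
    fix e assume e: "e \<in> edges ?T" and ee: "sgd.mult ?T e e = e"
    then obtain a where a: "e = h a" "a \<in> C" by (auto simp: trS_simps)
    have aa: "M a a = a" using ee a mT cl inj by (metis inj_on_def)
    show "let eSe = {sgd.mult ?T (sgd.mult ?T e s) e |s. s \<in> edges ?T}
       in \<forall>x\<in>eSe. \<forall>y\<in>eSe. sgd.mult ?T x y = sgd.mult ?T y x \<and> sgd.mult ?T x x = x"
      unfolding Let_def
    proof (intro ballI)
      fix x y assume x: "x \<in> {sgd.mult ?T (sgd.mult ?T e s) e |s. s \<in> edges ?T}"
        and y: "y \<in> {sgd.mult ?T (sgd.mult ?T e s) e |s. s \<in> edges ?T}"
      obtain c1 where c1: "c1 \<in> C" "x = h (M (M a c1) a)" using x a mT cl by (auto simp: trS_simps)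
      obtain c2 where c2: "c2 \<in> C" "y = h (M (M a c2) a)" using y a mT cl by (auto simp: trS_simps)
      have in1: "M (M a c1) a \<in> C" "M (M a c2) a \<in> C" using cl a c1 c2 by auto
      show "sgd.mult ?T x y = sgd.mult ?T y x \<and> sgd.mult ?T x x = x"
        using lsl[OF a(2) c1(1) c2(1) aa] c1 c2 in1 mT by simp
    qed
  qed
qed

definition CW :: "nat \<Rightarrow> 'b set \<Rightarrow> ('b list \<times> 'b list \<times> 'b list set) set" where
  "CW k B = Vw k ` {x. x \<noteq> [] \<and> set x \<subseteq> B}"

lemma Fac_set: "f \<in> Fac k x \<Longrightarrow> set f \<subseteq> set x"
proof
  fix c assume f: "f \<in> Fac k x" and c: "c \<in> set f"
  then obtain i where i: "length f = k" "i + k \<le> length x" "\<forall>j<k. f ! j = x ! (i + j)" unfolding Fac_def by auto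
  obtain j where j: "j < length f" "f ! j = c" using c by (auto simp: in_set_conv_nth)
  then have "c = x ! (i + j)" using i by auto
  moreover have "i + j < length x" using i j by simp
  ultimately show "c \<in> set x" by simp
qed

lemma CW_finite: assumes "finite B" shows "finite (CW k B)"
proof -
  let ?L = "{xs. set xs \<subseteq> B \<and> length xs \<le> k}"
  have "CW k B \<subseteq> ?L \<times> ?L \<times> Pow ?L"
  proof
    fix t assume "t \<in> CW k B"
    then obtain x where x: "t = Vw k x" "set x \<subseteq> B" unfolding CW_def by auto
    have "set (take k x) \<subseteq> B" "set (drop (length x - k) x) \<subseteq> B"
      using x(2) set_take_subset set_drop_subset by fast+
    moreover have "Fac k x \<subseteq> ?L" using x(2) Fac_set unfolding Fac_def by fastforce
    ultimately show "t \<in> ?L \<times> ?L \<times> Pow ?L" unfolding x(1) Vw_def by auto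
  qed
  moreover have "finite (?L \<times> ?L \<times> Pow ?L)" using finite_lists_length_le[OF assms] by blast
  ultimately show ?thesis by (rule finite_subset)
qed

lemma CW_closed: assumes "a \<in> CW k B" "b \<in> CW k B" shows "Mw k a b \<in> CW k B"
proof -
  obtain x y where "a = Vw k x" "b = Vw k y" "x \<noteq> []" "set x \<subseteq> B" "set y \<subseteq> B"
    using assms unfolding CW_def by auto
  then show ?thesis unfolding CW_def by (auto simp del: Mw.simps simp: Vw_app[symmetric] intro!: image_eqI[where x="x @ y"])
qed

lemma CW_assoc: "a \<in> CW k B \<Longrightarrow> b \<in> CW k B \<Longrightarrow> c \<in> CW k B \<Longrightarrow> Mw k (Mw k a b) c = Mw k a (Mw k b c)"
  unfolding CW_def by (auto simp del: Mw.simps simp: Vw_app[symmetric])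

lemma Mw_sandwich:
  assumes "length p = k" "length s = k"
  shows "\<exists>W. Mw k (Mw k (p, s, Z) c) (p, s, Z) = (p, s, Z \<union> W)"
proof -
  obtain p' s' Z' where c: "c = (p', s', Z')" by (cases c) auto
  define s2 where "s2 = drop (length (s @ s') - k) (s @ s')"
  have "Mw k (p, s, Z) c = (p, s2, Z \<union> Z' \<union> Fac k (s @ p'))" unfolding c s2_def using assms by simp
  then have "Mw k (Mw k (p, s, Z) c) (p, s, Z) = (p, s, Z \<union> (Z' \<union> Fac k (s @ p') \<union> Fac k (s2 @ p)))"
    using assms by auto
  then show ?thesis by blast
qed

lemma Mw_comm:
  assumes "length p = k" "length s = k" "Fac k (s @ p) \<subseteq> Z"
  shows "Mw k (p, s, Z \<union> W1) (p, s, Z \<union> W2) = (p, s, Z \<union> W1 \<union> W2)"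
  using assms by auto

lemma CW_lsl:
  assumes k: "k \<ge> 1" and e: "e \<in> CW k B" and ee: "Mw k e e = e"
  shows "Mw k (Mw k (Mw k e c1) e) (Mw k (Mw k e c2) e) = Mw k (Mw k (Mw k e c2) e) (Mw k (Mw k e c1) e) \<and>
        Mw k (Mw k (Mw k e c1) e) (Mw k (Mw k e c1) e) = Mw k (Mw k e c1) e"
proof -
  obtain z where z: "e = Vw k z" "z \<noteq> []" using e unfolding CW_def by auto
  obtain p s Z where pse: "e = (p, s, Z)" by (cases e) auto
  have p: "p = take k z" and s: "s = drop (length z - k) z" and Zd: "Z = Fac k z" using z pse by (auto simp: Vw_def)
  have lp: "1 \<le> length p" "length p \<le> k" using p z k by (auto simp: min_def Suc_le_eq)
  have "length z \<ge> 1" using z(2) by (cases z) auto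
  hence ls: "1 \<le> length s" "length s \<le> k" using s k by auto
  have e3: "take k (p @ p) = p" "drop (length (s @ s) - k) (s @ s) = s" "Z \<union> Z \<union> Fac k (s @ p) = Z"
    using ee unfolding pse by auto
  have "length (take k (p @ p)) = length p" using e3(1) by simp
  hence Lp: "length p = k" using lp by (auto simp: min_def split: if_splits)
  have "length (drop (length (s @ s) - k) (s @ s)) = length s" using e3(2) by simp
  hence Ls: "length s = k" using ls by auto
  have FZ: "Fac k (s @ p) \<subseteq> Z" using e3(3) by blast
  obtain W1 where W1: "Mw k (Mw k (p, s, Z) c1) (p, s, Z) = (p, s, Z \<union> W1)" using Mw_sandwich[OF Lp Ls] by blast
  obtain W2 where W2: "Mw k (Mw k (p, s, Z) c2) (p, s, Z) = (p, s, Z \<union> W2)" using Mw_sandwich[OF Lp Ls] by blast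
  show ?thesis
    unfolding pse W1 W2 Mw_comm[OF Lp Ls FZ]
    using Mw_comm[OF Lp Ls FZ, of W1 W1] by (auto simp del: Mw.simps)
qed

lemma fac_contra:
  assumes FF: "Fac (2*n+1) (v @ v) = Fac (2*n+1) v" and L: "length v \<ge> n + 1"
    and vg: "\<forall>t<length v. v ! t = g (w t)" and gs: "\<forall>t<n. g (w t) = Some (w t)"
    and gi: "\<forall>a b. g a = Some b \<longrightarrow> a = b"
  shows "\<exists>m>n. \<forall>i<n. w (m + i) = w i"
proof -
  define k where "k = 2*n+1"
  define L where "L = length v"
  define f0 where "f0 = map (\<lambda>j. (v @ v) ! (L - (n+1) + j)) [0..<k]"
  have "f0 \<in> Fac k (v @ v)"
    unfolding Fac_def f0_def using L unfolding L_def k_def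
    by (intro CollectI conjI exI[of _ "length v - (n+1)"]) (auto simp del: upt_Suc)
  hence "f0 \<in> Fac k v" using FF unfolding k_def by simp
  then obtain p where p: "p + k \<le> L" "\<forall>j<k. f0 ! j = v ! (p + j)" unfolding Fac_def L_def by auto
  have "w (p + n + 1 + i) = w i" if i: "i < n" for i
  proof -
    have j: "n + 1 + i < k" using i unfolding k_def by simp
    have "f0 ! (n + 1 + i) = (v @ v) ! (L - (n+1) + (n + 1 + i))" unfolding f0_def using j by simp
    also have "L - (n+1) + (n + 1 + i) = L + i" using L unfolding L_def by simp
    also have "(v @ v) ! (L + i) = v ! i" unfolding L_def by (simp add: nth_append)
    finally have "v ! (p + (n + 1 + i)) = v ! i" using p(2) j by simp
    moreover have "p + (n + 1 + i) < length v" using p(1) j unfolding L_def by simp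
    moreover have "i < length v" using L i by simp
    ultimately have "g (w (p + (n + 1 + i))) = Some (w i)" using vg gs i by metis
    then show ?thesis using gi by (metis add.assoc)
  qed
  then show ?thesis by (intro exI[of _ "p + n + 1"]) auto
qed

lemma detect:
  fixes w :: "nat \<Rightarrow> 'e"
  assumes n: "n \<ge> 1" and nr: "\<forall>m>n. \<exists>i<n. w (m + i) \<noteq> w i"
  shows "\<exists>T fe. T \<in> LSl \<and> verts T = {0} \<and> (\<forall>a. fe a \<in> edges T \<and> src T (fe a) = 0 \<and> rng T (fe a) = 0) \<and>
      (\<forall>N\<ge>2*n. sgd.mult T (seg T fe w 0 (Suc N)) (seg T fe w 0 (Suc N)) \<noteq> seg T fe w 0 (Suc N))"
proof -
  define k where "k = 2*n+1"
  define W where "W = w ` {..<n}"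
  define g where "g = (\<lambda>a. if a \<in> W then Some a else None)"
  define B where "B = insert None (Some ` W)"
  define C where "C = CW k B"
  have k1: "k \<ge> 1" unfolding k_def by simp
  have finB: "finite B" unfolding B_def W_def by simp
  have finC: "finite C" unfolding C_def using CW_finite[OF finB] .
  obtain h :: "_ \<Rightarrow> nat" where inj: "inj_on h C" using finite_imp_inj_to_nat_seg[OF finC] by blast
  have gB: "g a \<in> B" for a unfolding g_def B_def by auto
  have sC: "Vw k [g a] \<in> C" for a unfolding C_def CW_def using gB by auto
  have neC: "C \<noteq> {}" using sC by blast
  define T where "T = trS C h (Mw k)"
  define fe where "fe = (\<lambda>a. h (Vw k [g a]))"
  have TL: "T \<in> LSl" unfolding T_def
  proof (rule trS_LSl[OF finC neC inj])
    show "\<And>a b. a \<in> C \<Longrightarrow> b \<in> C \<Longrightarrow> Mw k a b \<in> C" unfolding C_def by (rule CW_closed)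
    show "\<And>a b c. a \<in> C \<Longrightarrow> b \<in> C \<Longrightarrow> c \<in> C \<Longrightarrow> Mw k (Mw k a b) c = Mw k a (Mw k b c)"
      unfolding C_def by (rule CW_assoc)
    show "\<And>e c1 c2. e \<in> C \<Longrightarrow> c1 \<in> C \<Longrightarrow> c2 \<in> C \<Longrightarrow> Mw k e e = e \<Longrightarrow>
        Mw k (Mw k (Mw k e c1) e) (Mw k (Mw k e c2) e) = Mw k (Mw k (Mw k e c2) e) (Mw k (Mw k e c1) e) \<and>
        Mw k (Mw k (Mw k e c1) e) (Mw k (Mw k e c1) e) = Mw k (Mw k e c1) e"
      unfolding C_def using CW_lsl[OF k1] by blast
  qed
  have feT: "fe a \<in> edges T \<and> src T (fe a) = 0 \<and> rng T (fe a) = 0" for a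
    unfolding fe_def T_def using sC by (simp add: trS_simps)
  have inCl: "Vw k (map (g \<circ> w) [i..<j]) \<in> C" if "i < j" for i j
    unfolding C_def CW_def using that gB by (auto intro!: image_eqI)
  have segT: "seg T fe w i j = h (Vw k (map (g \<circ> w) [i..<j]))" if "i < j" for i j
    using that
  proof (induction "j - i" arbitrary: i)
    case 0 then show ?case by simp
  next
    case (Suc d)
    show ?case
    proof (cases "Suc i = j")
      case True
      then show ?thesis using seg_single[of T fe w i] by (auto simp: fe_def)
    next
      case False
      hence lt: "Suc i < j" using Suc by simp
      have IH: "seg T fe w (Suc i) j = h (Vw k (map (g \<circ> w) [Suc i..<j]))" using Suc lt by simp
      have "seg T fe w i j = sgd.mult T (fe (w i)) (seg T fe w (Suc i) j)" using lt by (rule seg_step)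
      also have "\<dots> = h (Mw k (Vw k [g (w i)]) (Vw k (map (g \<circ> w) [Suc i..<j])))"
      proof -
        have "sgd.mult T (fe (w i)) (seg T fe w (Suc i) j) = sgd.mult T (h (Vw k [g (w i)])) (h (Vw k (map (g \<circ> w) [Suc i..<j])))"
          unfolding IH by (simp add: fe_def)
        also have "\<dots> = h (Mw k (Vw k [g (w i)]) (Vw k (map (g \<circ> w) [Suc i..<j])))"
          unfolding T_def by (rule trS_mult[OF inj sC inCl[OF lt]])
        finally show ?thesis .
      qed
      also have "\<dots> = h (Vw k ([g (w i)] @ map (g \<circ> w) [Suc i..<j]))" using Vw_app[of k "[g (w i)]" "map (g \<circ> w) [Suc i..<j]"] by simp
      also have "[g (w i)] @ map (g \<circ> w) [Suc i..<j] = map (g \<circ> w) [i..<j]"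
        using lt by (simp add: upt_conv_Cons)
      finally show ?thesis .
    qed
  qed
  have nonidem: "sgd.mult T (seg T fe w 0 (Suc N)) (seg T fe w 0 (Suc N)) \<noteq> seg T fe w 0 (Suc N)"
    if N: "N \<ge> 2*n" for N
  proof
    assume idm: "sgd.mult T (seg T fe w 0 (Suc N)) (seg T fe w 0 (Suc N)) = seg T fe w 0 (Suc N)"
    define v where "v = map (g \<circ> w) [0..<Suc N]"
    have vC: "Vw k v \<in> C" unfolding v_def by (rule inCl) simp
    have "h (Mw k (Vw k v) (Vw k v)) = h (Vw k v)"
      using idm segT[of 0 "Suc N"] trS_mult[OF inj vC vC, of "Mw k"] unfolding v_def T_def by simp
    hence "Mw k (Vw k v) (Vw k v) = Vw k v" using inj vC CW_closed[of "Vw k v" k B] unfolding C_def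
      by (meson inj_on_def)
    hence "Vw k (v @ v) = Vw k v" using Vw_app[of k v v] by simp
    hence FF: "Fac (2*n+1) (v @ v) = Fac (2*n+1) v" unfolding Vw_def k_def by simp
    have "\<exists>m>n. \<forall>i<n. w (m + i) = w i"
    proof (rule fac_contra[OF FF])
      show "length v \<ge> n + 1" unfolding v_def using N by simp
      show "\<forall>t<length v. v ! t = g (w t)" unfolding v_def by (auto simp del: upt_Suc)
      show "\<forall>t<n. g (w t) = Some (w t)" unfolding g_def W_def by auto
      show "\<forall>a b. g a = Some b \<longrightarrow> a = b" unfolding g_def by auto
    qed
    then show False using nr by blast
  qed
  have vT: "verts T = {0}" unfolding T_def by (simp add: trS_simps)
  show ?thesis using TL vT feT nonidem by blast
qed

lemma idem_imp_rec:
  fixes al om :: "'e \<Rightarrow> 'v" and w :: "nat \<Rightarrow> 'e"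
  assumes ip: "inf_path al om w" and LV: "LSl \<subseteq> V"
    and xP: "x \<in> PV al om V w" and xI: "Omega_idempotent al om V x"
  shows "recurrent w"
  unfolding recurrent_def
proof
  fix n
  show "\<exists>m>n. \<forall>i<n. w (m + i) = w i"
  proof (cases "n = 0")
    case True
    then show ?thesis by auto
  next
    case False
    show ?thesis
    proof (rule ccontr)
      assume "\<not> (\<exists>m>n. \<forall>i<n. w (m + i) = w i)"
      hence nr: "\<forall>m>n. \<exists>i<n. w (m + i) \<noteq> w i" by blast
      obtain T fe where T: "T \<in> LSl" "verts T = {0}" "\<forall>a. fe a \<in> edges T \<and> src T (fe a) = 0 \<and> rng T (fe a) = 0"
        "\<forall>N\<ge>2*n. sgd.mult T (seg T fe w 0 (Suc N)) (seg T fe w 0 (Suc N)) \<noteq> seg T fe w 0 (Suc N)"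
        using detect[of n w] False nr by auto
      define i0 where "i0 = (T, (\<lambda>_::'v. 0::nat), fe)"
      have i0: "i0 \<in> gidx al om V" unfolding i0_def gidx_def using T LV by auto
      obtain N where N: "N \<ge> 2*n" "agree_on {i0} x (embed al om V (map w [0..<Suc N]))"
        using xP i0 unfolding PV_def by blast
      have cN: "snd (snd x) i0 = seg T fe w 0 (Suc N)"
        using N(2) i0 unfolding agree_on_def embed_w i0_def by simp
      have "snd (snd (Omega_mult al om V x x)) i0 = snd (snd x) i0" using xI unfolding Omega_idempotent_def by simp
      hence "sgd.mult T (snd (snd x) i0) (snd (snd x) i0) = snd (snd x) i0"
        using i0 unfolding Omega_mult_def i0_def by simp
      then show False using T(4) N(1) cN by simp
    qed
  qed
qed

lemma pv_Sd: "pseudovariety Sd"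
  unfolding pseudovariety_def Sd_def by blast

lemma N_Sd: "N_sgd \<subseteq> Sd"
  unfolding N_sgd_def Sd_def fin_semigroup_def by blast

lemma LSl_Sd: "LSl \<subseteq> Sd"
  unfolding LSl_def Sd_def fin_semigroup_def by blast

lemma LSl_gLSl: "LSl \<subseteq> gLSl"
  unfolding gLSl_def by blast

lemma gLSl_Sd: "gLSl \<subseteq> Sd"
  unfolding gLSl_def using pv_Sd LSl_Sd by blast

lemma pv_fin: "pseudovariety V \<Longrightarrow> \<forall>S\<in>V. finite_sgd S"
  unfolding pseudovariety_def by blast

theorem mainTheorem16:
  fixes al om :: "'e \<Rightarrow> 'v::finite" and w :: "nat \<Rightarrow> 'e"
  assumes "inf_path al om w"
  shows "(recurrent w \<longleftrightarrow> (\<exists>x\<in>PV al om Sd w. Omega_idempotent al om Sd x))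
       \<and> ((\<exists>x\<in>PV al om Sd w. Omega_idempotent al om Sd x) \<longleftrightarrow>
          (\<forall>V. pseudovariety V \<and> N_sgd \<subseteq> V \<longrightarrow> (\<exists>x\<in>PV al om V w. Omega_idempotent al om V x)))
       \<and> ((\<forall>V. pseudovariety V \<and> N_sgd \<subseteq> V \<longrightarrow> (\<exists>x\<in>PV al om V w. Omega_idempotent al om V x)) \<longleftrightarrow>
          (\<exists>x\<in>PV al om gLSl w. Omega_idempotent al om gLSl x))"
proof -
  have finSd: "\<forall>S\<in>Sd. finite_sgd S" unfolding Sd_def by blast
  have fingL: "\<forall>S\<in>gLSl. finite_sgd S" using gLSl_Sd finSd by blast
  have R1: "recurrent w \<Longrightarrow> \<forall>S\<in>V. finite_sgd S \<Longrightarrow> (\<exists>x\<in>PV al om V w. Omega_idempotent al om V x)" for V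
    using rec_imp_idem[OF assms] by blast
  have R2: "(\<exists>x\<in>PV al om V w. Omega_idempotent al om V x) \<Longrightarrow> LSl \<subseteq> V \<Longrightarrow> recurrent w" for V
    using idem_imp_rec[OF assms] by blast
  have c1: "recurrent w \<longleftrightarrow> (\<exists>x\<in>PV al om Sd w. Omega_idempotent al om Sd x)"
    using R1[OF _ finSd] R2[OF _ LSl_Sd] by blast
  have c2: "(\<exists>x\<in>PV al om Sd w. Omega_idempotent al om Sd x) \<longleftrightarrow>
          (\<forall>V. pseudovariety V \<and> N_sgd \<subseteq> V \<longrightarrow> (\<exists>x\<in>PV al om V w. Omega_idempotent al om V x))"
    using R1 R2[OF _ LSl_Sd] pv_fin pv_Sd N_Sd by blast
  have c3: "(\<forall>V. pseudovariety V \<and> N_sgd \<subseteq> V \<longrightarrow> (\<exists>x\<in>PV al om V w. Omega_idempotent al om V x)) \<longleftrightarrow>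
          (\<exists>x\<in>PV al om gLSl w. Omega_idempotent al om gLSl x)"
    using R1 R2[OF _ LSl_Sd] R2[OF _ LSl_gLSl] R1[OF _ fingL] pv_fin pv_Sd N_Sd by blast
  show ?thesis using c1 c2 c3 by blast
qed

end
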